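(* There is a function $s$ with $s(p)=2^{\mathcal{O}(p^3)}$ such that for every graph $G$ of vertex integrity $p$ and every set $\mathcal{B}$ of balls of $G$, the positive non-clashing teaching dimension of $\mathcal{B}$ is at most $s(p)$.
   Context: For a graph $G$, $r\ge 0$ and $v\in V(G)$, the ball $B_r(v)$ is the set of vertices at distance at most $r$ from $v$. For a set $\mathcal{B}$ of balls of $G$, a positive teaching map $T$ assigns to each $B\in\mathcal{B}$ a set $T(B)\subseteq B$; its dimension is $\max_{B\in\mathcal{B}}|T(B)|$; $T$ is non-clashing if for every pair of distinct $B_1,B_2\in\mathcal{B}$ there is $w\in T(B_1)\cup T(B_2)$ with $w\notin B_1\cap B_2$. The positive non-clashing teaching dimension of $\mathcal{B}$ is the minimum dimension of a positive non-clashing teaching map for $\mathcal{B}$. The vertex integrity of $G$ is the minimum $b$ such that there is $X\subset V(G)$ with $|V(H)\cup X|\le b$ for every connected component $H$ of $G-X$. *)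

theory Defs
  imports Complex_Main
begin

definition graph :: "'a set \<Rightarrow> ('a \<times> 'a) set \<Rightarrow> bool" where
  "graph V E \<longleftrightarrow> finite V \<and> E \<subseteq> V \<times> V \<and> sym E \<and> irrefl E"

definition ball_g :: "'a set \<Rightarrow> ('a \<times> 'a) set \<Rightarrow> nat \<Rightarrow> 'a \<Rightarrow> 'a set" where
  "ball_g V E r v = {u \<in> V. \<exists>k\<le>r. (v, u) \<in> E ^^ k}"

definition balls_g :: "'a set \<Rightarrow> ('a \<times> 'a) set \<Rightarrow> 'a set set" where
  "balls_g V E = {ball_g V E r v | r v. v \<in> V}"

definition positive_teaching_map :: "('a set \<Rightarrow> 'a set) \<Rightarrow> 'a set set \<Rightarrow> bool" where
  "positive_teaching_map T \<B> \<longleftrightarrow> (\<forall>B\<in>\<B>. T B \<subseteq> B)"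

definition non_clashing :: "('a set \<Rightarrow> 'a set) \<Rightarrow> 'a set set \<Rightarrow> bool" where
  "non_clashing T \<B> \<longleftrightarrow>
     (\<forall>B1\<in>\<B>. \<forall>B2\<in>\<B>. B1 \<noteq> B2 \<longrightarrow> (\<exists>w \<in> T B1 \<union> T B2. w \<notin> B1 \<inter> B2))"

definition teaching_dim :: "('a set \<Rightarrow> 'a set) \<Rightarrow> 'a set set \<Rightarrow> nat" where
  "teaching_dim T \<B> = Sup (card ` T ` \<B>)"

definition pos_nc_teaching_dim :: "'a set set \<Rightarrow> nat" where
  "pos_nc_teaching_dim \<B> =
     Inf {teaching_dim T \<B> | T. positive_teaching_map T \<B> \<and> non_clashing T \<B>}"

definition component_g :: "'a set \<Rightarrow> ('a \<times> 'a) set \<Rightarrow> 'a set \<Rightarrow> 'a \<Rightarrow> 'a set" where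
  "component_g V E X v = {u \<in> V - X. (v, u) \<in> (E \<inter> ((V - X) \<times> (V - X)))\<^sup>*}"

definition vertex_integrity :: "'a set \<Rightarrow> ('a \<times> 'a) set \<Rightarrow> nat" where
  "vertex_integrity V E = Inf {b. \<exists>X \<subseteq> V. card X \<le> b \<and>
       (\<forall>v \<in> V - X. card (component_g V E X v \<union> X) \<le> b)}"

end

theory Submission
  imports Defs "HOL-Library.FuncSet"
begin

definition Rc :: "'a set \<Rightarrow> ('a \<times> 'a) set \<Rightarrow> 'a set \<Rightarrow> 'a \<Rightarrow> ('a \<times> 'a) set" where
  "Rc V E X w = E \<inter> ((component_g V E X w \<union> X) \<times> component_g V E X w)"

definition prof :: "'a set \<Rightarrow> ('a \<times> 'a) set \<Rightarrow> 'a set \<Rightarrow> 'a \<Rightarrow> 'a \<Rightarrow> nat option" where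
  "prof V E X u = (\<lambda>x\<in>X. if \<exists>k. (x,u) \<in> (Rc V E X u)^^k
       then Some (LEAST k. (x,u) \<in> (Rc V E X u)^^k) else None)"

lemma comp_self:
  assumes "w \<in> V - X" shows "w \<in> component_g V E X w"
  using assms unfolding component_g_def by auto

lemma comp_sym_rt:
  assumes "sym E" "(a,b) \<in> (E \<inter> ((V - X) \<times> (V - X)))\<^sup>*"
  shows "(b,a) \<in> (E \<inter> ((V - X) \<times> (V - X)))\<^sup>*"
proof -
  have "sym (E \<inter> ((V - X) \<times> (V - X)))"
    using assms(1) by (auto simp: sym_def)
  then have "sym ((E \<inter> ((V - X) \<times> (V - X)))\<^sup>*)" by (rule sym_rtrancl)
  then show ?thesis using assms(2) by (auto simp: sym_def)
qed

lemma comp_eq: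
  assumes "sym E" "v \<in> component_g V E X w"
  shows "component_g V E X v = component_g V E X w"
proof -
  let ?F = "E \<inter> ((V - X) \<times> (V - X))"
  have wv: "(w,v) \<in> ?F\<^sup>*" using assms(2) unfolding component_g_def by auto
  then have vw: "(v,w) \<in> ?F\<^sup>*" using comp_sym_rt[OF assms(1)] by blast
  show ?thesis unfolding component_g_def
    using wv vw by (auto intro: rtrancl_trans)
qed

lemma comp_adj:
  assumes "sym E" "(y,w) \<in> E" "y \<in> V - X" "w \<in> V - X"
  shows "component_g V E X y = component_g V E X w"
proof -
  have "y \<in> component_g V E X w"
    unfolding component_g_def using assms sym_def[of E]
    by (auto intro!: r_into_rtrancl)
  then show ?thesis using comp_eq[OF assms(1)] by blast
qed

lemma relpow_mono_sub: fixes R S :: "('a \<times> 'a) set" shows "R \<subseteq> S \<Longrightarrow> (a,b) \<in> R^^k \<Longrightarrow> (a,b) \<in> S^^k"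
proof (induction k arbitrary: b)
  case 0 then show ?case by auto
next
  case (Suc k) then show ?case by (auto intro: relpow_Suc_I)
qed

lemma F2:
  assumes g: "graph V E" and w: "w \<in> V - X" and walk: "(v',w) \<in> E^^m"
    and nv: "v' \<notin> component_g V E X w"
  shows "\<exists>x a k. x \<in> X \<and> a + k \<le> m \<and> (v',x) \<in> E^^a \<and> (x,w) \<in> (Rc V E X w)^^k"
  using w walk nv
proof (induction m arbitrary: w)
  case 0
  then show ?case using comp_self[of w V X E] by auto
next
  case (Suc m)
  from Suc.prems(2) obtain y where vy: "(v',y) \<in> E^^m" and yw: "(y,w) \<in> E" by auto
  have EV: "E \<subseteq> V \<times> V" "sym E" using g unfolding graph_def by auto
  have wc: "w \<in> component_g V E X w" using comp_self Suc.prems(1) by metis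
  show ?case
  proof (cases "y \<in> X")
    case True
    have "(y,w) \<in> Rc V E X w" unfolding Rc_def using True yw wc by auto
    then show ?thesis using True vy by (intro exI[of _ y] exI[of _ m] exI[of _ 1]) auto
  next
    case False
    have yV: "y \<in> V - X" using False yw EV by auto
    have ceq: "component_g V E X y = component_g V E X w"
      using comp_adj[OF EV(2) yw yV Suc.prems(1)] .
    from Suc.IH[OF yV vy] Suc.prems(3) ceq obtain x a k where
      "x \<in> X" "a + k \<le> m" "(v',x) \<in> E^^a" "(x,y) \<in> (Rc V E X w)^^k"
      unfolding Rc_def by auto
    moreover have "(y,w) \<in> Rc V E X w" unfolding Rc_def using yw wc ceq comp_self[OF yV] by auto
    ultimately show ?thesis
      by (intro exI[of _ x] exI[of _ a] exI[of _ "Suc k"]) (auto intro: relpow_Suc_I)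
  qed
qed

lemma F1:
  assumes "(v',x) \<in> E^^a" "(x,u) \<in> (Rc V E X u)^^k"
  shows "(v',u) \<in> E^^(a+k)"
proof -
  have "(x,u) \<in> E^^k" using relpow_mono_sub[OF _ assms(2)] unfolding Rc_def by auto
  then show ?thesis using assms(1) by (auto simp: relpow_add)
qed

lemma hull_one:
  assumes g: "graph V E" and uV: "u \<in> V" and wX: "w \<in> V - X"
    and wB': "w \<in> ball_g V E r' v'" and nv: "v' \<notin> component_g V E X w"
    and pr: "prof V E X w = prof V E X u"
  shows "u \<in> ball_g V E r' v'"
proof -
  from wB' obtain m where m: "m \<le> r'" "(v',w) \<in> E^^m" unfolding ball_g_def by auto
  from F2[OF g wX m(2) nv] obtain x a k where xak: "x \<in> X" "a + k \<le> m" "(v',x) \<in> E^^a"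
      "(x,w) \<in> (Rc V E X w)^^k" by blast
  define k0 where "k0 = (LEAST k. (x,w) \<in> (Rc V E X w)^^k)"
  have k0k: "k0 \<le> k" unfolding k0_def using xak(4) by (rule Least_le)
  have "prof V E X w x = Some k0" unfolding prof_def k0_def using xak by auto
  then have pu: "prof V E X u x = Some k0" using pr by simp
  then have ex: "\<exists>k. (x,u) \<in> (Rc V E X u)^^k" and k0u: "k0 = (LEAST k. (x,u) \<in> (Rc V E X u)^^k)"
    unfolding prof_def using xak(1) by (auto split: if_splits)
  have "(x,u) \<in> (Rc V E X u)^^k0" unfolding k0u using ex by (rule LeastI_ex)
  from F1[OF xak(3) this] have "(v',u) \<in> E^^(a+k0)" .
  moreover have "a + k0 \<le> r'" using k0k xak(2) m(1) by linarith
  ultimately show ?thesis unfolding ball_g_def using uV by auto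
qed

lemma hull:
  assumes g: "graph V E" and BB: "B = ball_g V E r v" and SB': "S \<subseteq> ball_g V E r' v'"
    and SX: "B \<inter> X \<subseteq> S"
    and cov: "\<forall>u \<in> B - X. u \<in> S \<or> (\<exists>w1\<in>S-X. \<exists>w2\<in>S-X.
        component_g V E X w1 \<noteq> component_g V E X w2 \<and> prof V E X w1 = prof V E X u
         \<and> prof V E X w2 = prof V E X u)"
  shows "B \<subseteq> ball_g V E r' v'"
proof
  fix u assume uB: "u \<in> B"
  have uV: "u \<in> V" using uB BB unfolding ball_g_def by auto
  have symE: "sym E" using g unfolding graph_def by auto
  have SV: "S \<subseteq> V" using SB' unfolding ball_g_def by auto
  show "u \<in> ball_g V E r' v'"
  proof (cases "u \<in> S")
    case True then show ?thesis using SB' by auto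
  next
    case False
    then have "u \<notin> X" using SX uB by auto
    with cov uB False obtain w1 w2 where w: "w1 \<in> S - X" "w2 \<in> S - X"
        "component_g V E X w1 \<noteq> component_g V E X w2" "prof V E X w1 = prof V E X u"
         "prof V E X w2 = prof V E X u" by blast
    have "v' \<notin> component_g V E X w1 \<or> v' \<notin> component_g V E X w2"
      using comp_eq[OF symE, of v' V X] w(3) by metis
    then show ?thesis
    proof
      assume "v' \<notin> component_g V E X w1"
      then show ?thesis using hull_one[OF g uV _ _ _ w(4)] w(1) SV SB' by auto
    next
      assume "v' \<notin> component_g V E X w2"
      then show ?thesis using hull_one[OF g uV _ _ _ w(5)] w(2) SV SB' by auto
    qed
  qed
qed


definition Cs :: "'a set \<Rightarrow> ('a \<times> 'a) set \<Rightarrow> 'a set \<Rightarrow> 'a set \<Rightarrow> ('a \<Rightarrow> nat option) \<Rightarrow> 'a set set" where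
  "Cs V E X B \<pi> = (\<lambda>w. component_g V E X w) ` {w \<in> B - X. prof V E X w = \<pi>}"

definition good_sel :: "'a set set \<Rightarrow> 'a set set \<Rightarrow> bool" where
  "good_sel Q P \<longleftrightarrow> P \<subseteq> Q \<and> finite P \<and> card P \<le> 2 \<and> (Q \<subseteq> P \<or> (\<exists>C1\<in>P. \<exists>C2\<in>P. C1 \<noteq> C2))"

definition sel :: "'a set \<Rightarrow> ('a \<times> 'a) set \<Rightarrow> 'a set \<Rightarrow> 'a set \<Rightarrow> ('a \<Rightarrow> nat option) \<Rightarrow> 'a set set" where
  "sel V E X B \<pi> = (SOME P. good_sel (Cs V E X B \<pi>) P)"

definition Tm :: "'a set \<Rightarrow> ('a \<times> 'a) set \<Rightarrow> 'a set \<Rightarrow> 'a set \<Rightarrow> 'a set" where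
  "Tm V E X B = (B \<inter> X) \<union> (\<Union>\<pi> \<in> prof V E X ` (B - X). \<Union>C \<in> sel V E X B \<pi>. B \<inter> C)"

lemma good_sel_ex: "\<exists>P. good_sel Q P"
proof (cases "\<exists>C1\<in>Q. \<exists>C2\<in>Q. C1 \<noteq> C2")
  case True
  then obtain C1 C2 where "C1 \<in> Q" "C2 \<in> Q" "C1 \<noteq> C2" by blast
  then show ?thesis unfolding good_sel_def by (intro exI[of _ "{C1,C2}"]) auto
next
  case False
  show ?thesis
  proof (cases "Q = {}")
    case True then show ?thesis unfolding good_sel_def by (intro exI[of _ Q]) auto
  next
    case F2: False
    then obtain c where c: "c \<in> Q" by blast
    then have "Q = {c}" using False by auto
    then show ?thesis unfolding good_sel_def by (intro exI[of _ Q]) auto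
  qed
qed

lemma sel_good: "good_sel (Cs V E X B \<pi>) (sel V E X B \<pi>)"
  unfolding sel_def by (rule someI_ex[OF good_sel_ex])

lemma Tm_sub: "Tm V E X B \<subseteq> B"
  unfolding Tm_def by blast

lemma Tm_X: "B \<inter> X \<subseteq> Tm V E X B"
  unfolding Tm_def by blast

lemma Tm_cov:
  assumes BV: "B \<subseteq> V"
  shows "\<forall>u \<in> B - X. u \<in> Tm V E X B \<or> (\<exists>w1\<in>Tm V E X B - X. \<exists>w2\<in>Tm V E X B - X.
        component_g V E X w1 \<noteq> component_g V E X w2 \<and> prof V E X w1 = prof V E X u
         \<and> prof V E X w2 = prof V E X u)"
proof
  fix u assume u: "u \<in> B - X"
  let ?\<pi> = "prof V E X u"
  let ?P = "sel V E X B ?\<pi>"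
  have g: "good_sel (Cs V E X B ?\<pi>) ?P" by (rule sel_good)
  have inP: "B \<inter> C \<subseteq> Tm V E X B" if "C \<in> ?P" for C
    unfolding Tm_def using u that by blast
  have cu: "component_g V E X u \<in> Cs V E X B ?\<pi>" unfolding Cs_def using u by auto
  have "u \<in> V - X" using u BV by blast
  then have uC: "u \<in> component_g V E X u" by (rule comp_self)
  from g consider "Cs V E X B ?\<pi> \<subseteq> ?P" | "\<exists>C1\<in>?P. \<exists>C2\<in>?P. C1 \<noteq> C2"
    unfolding good_sel_def by blast
  then show "u \<in> Tm V E X B \<or> (\<exists>w1\<in>Tm V E X B - X. \<exists>w2\<in>Tm V E X B - X.
        component_g V E X w1 \<noteq> component_g V E X w2 \<and> prof V E X w1 = prof V E X u
         \<and> prof V E X w2 = prof V E X u)"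
  proof cases
    case 1
    then have "component_g V E X u \<in> ?P" using cu by blast
    then have "u \<in> Tm V E X B" using inP uC u by blast
    then show ?thesis by blast
  next
    case 2
    then obtain C1 C2 where C: "C1 \<in> ?P" "C2 \<in> ?P" "C1 \<noteq> C2" by blast
    have "?P \<subseteq> Cs V E X B ?\<pi>" using g unfolding good_sel_def by blast
    with C obtain w1 w2 where w: "w1 \<in> B - X" "prof V E X w1 = ?\<pi>" "C1 = component_g V E X w1"
       "w2 \<in> B - X" "prof V E X w2 = ?\<pi>" "C2 = component_g V E X w2"
      unfolding Cs_def by blast
    have "w1 \<in> V - X" "w2 \<in> V - X" using w BV by blast+
    then have "w1 \<in> C1" "w2 \<in> C2" using w comp_self by metis+
    then have "w1 \<in> Tm V E X B" "w2 \<in> Tm V E X B" using inP C w by blast+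
    then show ?thesis using w C by blast
  qed
qed


lemma comp_sub: "component_g V E X w \<subseteq> V - X"
  unfolding component_g_def by auto

lemma prof_range:
  assumes fV: "finite V" and u: "u \<in> V - X" and cp: "card (component_g V E X u \<union> X) \<le> p"
    and x: "x \<in> X" and XV: "X \<subseteq> V"
  shows "prof V E X u x \<in> insert None (Some ` {0..p*p})"
proof (cases "\<exists>k. (x,u) \<in> (Rc V E X u)^^k")
  case False then show ?thesis unfolding prof_def using x by auto
next
  case True
  then obtain k where k: "(x,u) \<in> (Rc V E X u)^^k" by blast
  let ?C = "component_g V E X u"
  have "?C \<union> X \<subseteq> V" using comp_sub[of V E X u] XV by blast
  then have fC: "finite (?C \<union> X)" using fV by (rule finite_subset)
  have sub: "Rc V E X u \<subseteq> (?C \<union> X) \<times> ?C" unfolding Rc_def by auto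
  have fR: "finite (Rc V E X u)" using fC sub by (meson finite_SigmaI finite_Un finite_subset)
  have "card (Rc V E X u) \<le> card ((?C \<union> X) \<times> ?C)"
    using sub fC by (intro card_mono) auto
  also have "\<dots> = card (?C \<union> X) * card ?C" by (rule card_cartesian_product)
  also have "\<dots> \<le> p * p"
  proof -
    have "card ?C \<le> card (?C \<union> X)" using fC by (intro card_mono) auto
    then show ?thesis using cp by (meson le_trans mult_le_mono)
  qed
  finally have cR: "card (Rc V E X u) \<le> p * p" .
  have L: "(LEAST k. (x,u) \<in> (Rc V E X u)^^k) \<le> p * p"
  proof (cases "k = 0")
    case True
    then show ?thesis using k Least_le[of "\<lambda>k. (x,u) \<in> (Rc V E X u)^^k" 0] by auto
  next
    case False
    then have "(x,u) \<in> (\<Union>n\<in>{n. 0 < n \<and> n \<le> card (Rc V E X u)}. (Rc V E X u)^^n)"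
      using relpow_finite_bounded1[OF fR, of k] k by blast
    then obtain n where n: "n \<le> card (Rc V E X u)" "(x,u) \<in> (Rc V E X u)^^n" by blast
    have "(LEAST k. (x,u) \<in> (Rc V E X u)^^k) \<le> n" using n(2) by (rule Least_le)
    then show ?thesis using n(1) cR by linarith
  qed
  show ?thesis unfolding prof_def using x True L by auto
qed

lemma card_Tm:
  assumes fV: "finite V" and XV: "X \<subseteq> V" and cX: "card X \<le> p"
    and cp: "\<forall>v\<in>V - X. card (component_g V E X v \<union> X) \<le> p" and BV: "B \<subseteq> V"
  shows "card (Tm V E X B) \<le> p + (p*p+2)^p * (2*p)"
proof -
  let ?I = "prof V E X ` (B - X)"
  let ?A = "\<Union>\<pi> \<in> ?I. \<Union>C \<in> sel V E X B \<pi>. B \<inter> C"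
  have fB: "finite B" using fV BV finite_subset by blast
  have c1: "card (B \<inter> X) \<le> p"
    using cX fV XV by (meson card_mono finite_subset inf_le2 le_trans)
  have Isub: "?I \<subseteq> PiE X (\<lambda>_. insert None (Some ` {0..p*p}))"
  proof
    fix f assume "f \<in> ?I"
    then obtain u where u: "u \<in> B - X" "f = prof V E X u" by blast
    have uV: "u \<in> V - X" using u BV by blast
    show "f \<in> PiE X (\<lambda>_. insert None (Some ` {0..p*p}))"
      unfolding u(2) PiE_def Pi_def
      using prof_range[OF fV uV cp[rule_format, OF uV] _ XV] by (auto simp: prof_def)
  qed
  have fX: "finite X" using fV XV finite_subset by blast
  have "card ?I \<le> card (PiE X (\<lambda>_. insert None (Some ` {0..p*p})))"
    using Isub fX by (intro card_mono) (auto intro: finite_PiE)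
  also have "\<dots> = (p*p+2) ^ card X"
    using fX by (simp add: card_PiE card_image)
  also have "\<dots> \<le> (p*p+2)^p" using cX by (intro power_increasing) auto
  finally have cI: "card ?I \<le> (p*p+2)^p" .
  have each: "card (\<Union>C \<in> sel V E X B \<pi>. B \<inter> C) \<le> 2 * p" if "\<pi> \<in> ?I" for \<pi>
  proof -
    have g: "good_sel (Cs V E X B \<pi>) (sel V E X B \<pi>)" by (rule sel_good)
    then have fP: "finite (sel V E X B \<pi>)" and cP: "card (sel V E X B \<pi>) \<le> 2"
      and sP: "sel V E X B \<pi> \<subseteq> Cs V E X B \<pi>" unfolding good_sel_def by auto
    have "card (\<Union>C \<in> sel V E X B \<pi>. B \<inter> C) \<le> (\<Sum>C \<in> sel V E X B \<pi>. card (B \<inter> C))"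
      by (rule card_UN_le[OF fP])
    also have "\<dots> \<le> card (sel V E X B \<pi>) * p"
    proof -
      have bd: "card (B \<inter> C) \<le> p" if CP: "C \<in> sel V E X B \<pi>" for C
      proof -
      obtain w where w: "w \<in> B - X" "C = component_g V E X w" using CP sP unfolding Cs_def by blast
      have wV: "w \<in> V - X" using w BV by blast
      have "C \<union> X \<subseteq> V" using comp_sub[of V E X w] w(2) XV by blast
      then have fCX: "finite (C \<union> X)" using fV by (rule finite_subset)
      have "card (B \<inter> C) \<le> card (C \<union> X)" using fCX by (intro card_mono) auto
      then show "card (B \<inter> C) \<le> p" using cp[rule_format, OF wV] w(2) by simp
      qed
      show ?thesis using sum_bounded_above[of "sel V E X B \<pi>" "\<lambda>C. card (B \<inter> C)" p] bd by simp
    qed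
    also have "\<dots> \<le> 2 * p" using cP by simp
    finally show ?thesis .
  qed
  have "card ?A \<le> (\<Sum>\<pi> \<in> ?I. card (\<Union>C \<in> sel V E X B \<pi>. B \<inter> C))"
    using fB by (intro card_UN_le) auto
  also have "\<dots> \<le> card ?I * (2 * p)"
    using sum_bounded_above[of ?I "\<lambda>\<pi>. card (\<Union>C \<in> sel V E X B \<pi>. B \<inter> C)" "2*p"] each by simp
  also have "\<dots> \<le> (p*p+2)^p * (2*p)" using cI by simp
  finally have cA: "card ?A \<le> (p*p+2)^p * (2*p)" .
  have "card (Tm V E X B) \<le> card (B \<inter> X) + card ?A"
    unfolding Tm_def by (rule card_Un_le)
  then show ?thesis using c1 cA by linarith
qed


lemma arith_a: "1 \<le> p \<Longrightarrow> p*p+2 \<le> (4::nat)^p"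
proof (induction p rule: dec_induct)
  case base then show ?case by simp
next
  case (step n)
  have "n \<le> n * n" by simp
  then have "Suc n * Suc n + 2 \<le> 4 * (n*n+2)" by (simp add: algebra_simps; linarith)
  also have "\<dots> \<le> 4 * 4^n" using step.IH by simp
  finally show ?case by simp
qed

lemma arith_b: "2*p \<le> (4::nat)^p"
proof (induction p)
  case 0 then show ?case by simp
next
  case (Suc n)
  have "(1::nat) \<le> 4^n" by simp
  moreover have "2 * Suc n = 2*n + 2" "(4::nat)^Suc n = 4 * 4^n" by simp_all
  ultimately show ?case using Suc.IH by linarith
qed

lemma arith_bound: "p + (p*p+2)^p * (2*p) \<le> (2::nat)^(6*p^3)"
proof (cases "p = 0")
  case True then show ?thesis by simp
next
  case False
  then have p1: "1 \<le> p" by simp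
  have "(p*p+2)^p \<le> (4^p)^p" using arith_a[OF p1] by (rule power_mono) simp
  also have "\<dots> = 4^(p*p)" by (simp add: power_mult)
  finally have A: "(p*p+2)^p \<le> 4^(p*p)" .
  have B: "p \<le> 4^p" using arith_b[of p] by linarith
  have "p + (p*p+2)^p * (2*p) \<le> 4^p + 4^(p*p) * 4^p"
    using A B arith_b[of p] by (intro add_mono mult_mono) auto
  also have "\<dots> \<le> 4^(p*p+p) + 4^(p*p+p)"
    by (intro add_mono) (auto simp: power_add intro: power_increasing)
  also have "\<dots> \<le> 4^(p*p+p+1)" by simp
  also have "\<dots> \<le> 4^(3*p^3)"
  proof (rule power_increasing)
    have "p*p \<le> p^3" "p \<le> p^3" "1 \<le> p^3" using p1
      by (auto simp: power3_eq_cube)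
    then show "p*p+p+1 \<le> 3*p^3" by linarith
  qed simp
  also have "\<dots> = 2^(6*p^3)"
  proof -
    have "(4::nat)^(3*p^3) = (2^2)^(3*p^3)" by simp
    also have "\<dots> = 2^(2*(3*p^3))" by (rule power_mult[symmetric])
    finally show ?thesis by simp
  qed
  finally show ?thesis .
qed


lemma ball_sub: "ball_g V E r v \<subseteq> V"
  unfolding ball_g_def by auto

theorem corollary10:
  "\<exists>s :: nat \<Rightarrow> nat. (\<exists>C::real. \<forall>\<^sub>F p in at_top. real (s p) \<le> 2 powr (C * real p ^ 3)) \<and>
     (\<forall>(V :: 'a set) E \<B>. graph V E \<longrightarrow> \<B> \<subseteq> balls_g V E \<longrightarrow>
        pos_nc_teaching_dim \<B> \<le> s (vertex_integrity V E))"
proof -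
  define s where "s = (\<lambda>p::nat. (2::nat)^(6*p^3))"
  have A: "\<exists>C::real. \<forall>\<^sub>F p in at_top. real (s p) \<le> 2 powr (C * real p ^ 3)"
  proof (intro exI[of _ 6] always_eventually allI)
    fix p :: nat
    have "(2::real) powr (6 * real p ^ 3) = 2 powr (real (6*p^3))" by simp
    also have "\<dots> = 2 ^ (6*p^3)" by (rule powr_realpow) simp
    finally show "real (s p) \<le> 2 powr (6 * real p ^ 3)" unfolding s_def by simp
  qed
  have B: "pos_nc_teaching_dim \<B> \<le> s (vertex_integrity V E)"
    if g: "graph V E" and sub: "\<B> \<subseteq> balls_g V E" for V :: "'a set" and E \<B>
  proof -
    let ?p = "vertex_integrity V E"
    let ?K = "{b. \<exists>X \<subseteq> V. card X \<le> b \<and>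
       (\<forall>v \<in> V - X. card (component_g V E X v \<union> X) \<le> b)}"
    have "card V \<in> ?K" by (rule CollectI, rule exI[of _ V]) simp
    then have "?K \<noteq> {}" by (rule ex_in_conv[THEN iffD1, OF exI])
    then have "Inf ?K \<in> ?K" by (rule Inf_nat_def1)
    have eq: "?p = Inf ?K" unfolding vertex_integrity_def by (rule refl)
    have "?p \<in> ?K" using \<open>Inf ?K \<in> ?K\<close> by (subst eq)
    then have "\<exists>X \<subseteq> V. card X \<le> ?p \<and>
       (\<forall>v \<in> V - X. card (component_g V E X v \<union> X) \<le> ?p)" by (rule CollectD)
    then obtain X where X: "X \<subseteq> V" "card X \<le> ?p"
        "\<forall>v \<in> V - X. card (component_g V E X v \<union> X) \<le> ?p"
      by (elim exE conjE)
    have fV: "finite V" using g by (simp add: graph_def)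
    define T where "T = Tm V E X"
    have BV: "B \<subseteq> V" if "B \<in> \<B>" for B
    proof -
      have "B \<in> balls_g V E" using that sub by (rule subsetD[rotated])
      then obtain r v where "B = ball_g V E r v" unfolding balls_g_def by blast
      then show ?thesis by (simp add: ball_sub)
    qed
    have pos: "positive_teaching_map T \<B>"
      unfolding positive_teaching_map_def T_def by (intro ballI Tm_sub)
    have hullT: "B1 \<subseteq> B2" if h: "B1 \<in> \<B>" "B2 \<in> \<B>" "T B1 \<subseteq> B2" for B1 B2
    proof -
      obtain r v where r: "B1 = ball_g V E r v" using h(1) sub unfolding balls_g_def by blast
      obtain r' v' where r': "B2 = ball_g V E r' v'" using h(2) sub unfolding balls_g_def by blast
      have c1: "T B1 \<subseteq> ball_g V E r' v'" using h(3) r' by simp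
      show ?thesis unfolding r'
        using hull[OF g r c1[unfolded T_def] Tm_X Tm_cov[OF BV[OF h(1)]]] .
    qed
    have nc: "non_clashing T \<B>"
      unfolding non_clashing_def
    proof (intro ballI impI)
      fix B1 B2 assume b: "B1 \<in> \<B>" "B2 \<in> \<B>" "B1 \<noteq> B2"
      show "\<exists>w\<in>T B1 \<union> T B2. w \<notin> B1 \<inter> B2"
      proof (rule ccontr)
        assume "\<not> ?thesis"
        then have "T B1 \<subseteq> B2" "T B2 \<subseteq> B1" by auto
        then have "B1 \<subseteq> B2" "B2 \<subseteq> B1" using hullT b by auto
        then show False using b by auto
      qed
    qed
    have td: "teaching_dim T \<B> \<le> ?p + (?p*?p+2)^?p * (2*?p)"
    proof (cases "\<B> = {}")
      case True then show ?thesis unfolding teaching_dim_def by simp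
    next
      case False
      show ?thesis unfolding teaching_dim_def
      proof (rule cSup_least)
        show "card ` T ` \<B> \<noteq> {}" using False by simp
      next
        fix x assume "x \<in> card ` T ` \<B>"
        then obtain B where B: "B \<in> \<B>" "x = card (T B)" by blast
        show "x \<le> ?p + (?p*?p+2)^?p * (2*?p)"
          unfolding B(2) T_def by (rule card_Tm[OF fV X(1) X(2) X(3) BV[OF B(1)]])
      qed
    qed
    have "pos_nc_teaching_dim \<B> \<le> teaching_dim T \<B>"
    proof -
      have mem: "teaching_dim T \<B> \<in> {teaching_dim T \<B> | T. positive_teaching_map T \<B> \<and> non_clashing T \<B>}"
        using pos nc by blast
      show ?thesis unfolding pos_nc_teaching_dim_def using mem bdd_below_bot by (rule cInf_lower)
    qed
    also have "\<dots> \<le> ?p + (?p*?p+2)^?p * (2*?p)" by (rule td)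
    also have "\<dots> \<le> s ?p" unfolding s_def by (rule arith_bound)
    finally show ?thesis .
  qed
  show ?thesis
  proof (intro exI[of _ s] conjI allI impI)
    show "\<exists>C::real. \<forall>\<^sub>F p in at_top. real (s p) \<le> 2 powr (C * real p ^ 3)" by (rule A)
  next
    fix V :: "'a set" and E \<B> assume "graph V E" "\<B> \<subseteq> balls_g V E"
    then show "pos_nc_teaching_dim \<B> \<le> s (vertex_integrity V E)" by (rule B)
  qed
qed

end
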